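(* Let $G=G_1\times\cdots\times G_m$ be a group, let $U\subset G$ be finite, and let $U_i$ be the projection of $U$ to the factor $G_i$. Suppose there exist $\alpha,\beta>0$ such that $|U_i^n|\geqslant(\alpha|U_i|)^{\beta n}$ for every $n\in\mathbb{N}$ and every $i\in\{1,\dots,m\}$. Then $|U^n|\geqslant(\alpha^m|U|)^{(\beta/m)n}$ for every $n\in\mathbb{N}$.
   Context: $U^n=\{u_1\cdots u_n:u_i\in U\}$. *)

theory Defs
  imports "HOL-Analysis.Analysis" "HOL-Algebra.Product_Groups"
begin

fun set_power :: "('a, 'b) monoid_scheme \<Rightarrow> 'a set \<Rightarrow> nat \<Rightarrow> 'a set" where
  "set_power G U 0 = {\<one>\<^bsub>G\<^esub>}"
| "set_power G U (Suc n) = set_power G U n <#>\<^bsub>G\<^esub> U"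

end

theory Submission
  imports Defs
begin

lemma proj_set_power:
  assumes "i \<in> I"
  shows "(\<lambda>u. u i) ` set_power (product_group I G) U n = set_power (G i) ((\<lambda>u. u i) ` U) n"
proof (induction n)
  case 0
  then show ?case using assms by simp
next
  case (Suc n)
  have "(\<lambda>u. u i) ` (set_power (product_group I G) U n <#>\<^bsub>product_group I G\<^esub> U)
      = ((\<lambda>u. u i) ` set_power (product_group I G) U n) <#>\<^bsub>G i\<^esub> ((\<lambda>u. u i) ` U)"
    using assms apply (auto simp: set_mult_def image_iff)
    by blast+
  then show ?case using Suc by simp
qed

lemma finite_set_power:
  assumes "finite U"
  shows "finite (set_power H U n)"
  by (induction n) (auto simp: set_mult_def assms)

theorem corollary2p23:
  fixes G :: "nat \<Rightarrow> ('a, 'b) monoid_scheme"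
    and m :: nat and U :: "(nat \<Rightarrow> 'a) set" and \<alpha> \<beta> :: real
  assumes "m \<ge> 1"
    and "\<And>i. i \<in> {1..m} \<Longrightarrow> group (G i)"
    and "U \<subseteq> carrier (product_group {1..m} G)"
    and "finite U"
    and "\<alpha> > 0" and "\<beta> > 0"
    and "\<And>n i. n \<ge> 1 \<Longrightarrow> i \<in> {1..m} \<Longrightarrow>
           real (card (set_power (G i) ((\<lambda>u. u i) ` U) n))
             \<ge> (\<alpha> * real (card ((\<lambda>u. u i) ` U))) powr (\<beta> * real n)"
  shows "\<And>n. n \<ge> 1 \<Longrightarrow>
           real (card (set_power (product_group {1..m} G) U n))
             \<ge> (\<alpha> ^ m * real (card U)) powr ((\<beta> / real m) * real n)"
proof -
  fix n :: nat assume n: "n \<ge> 1"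
  let ?PG = "product_group {1..m} G"
  define N where "N = real (card (set_power ?PG U n))"
  define c where "c i = real (card ((\<lambda>u. u i) ` U))" for i
  show "real (card (set_power ?PG U n)) \<ge> (\<alpha> ^ m * real (card U)) powr ((\<beta> / real m) * real n)"
  proof (cases "U = {}")
    case True
    then show ?thesis by simp
  next
    case False
    have fin: "finite (set_power ?PG U n)" using finite_set_power assms(4) by blast
    have Ni: "N \<ge> (\<alpha> * c i) powr (\<beta> * real n)" if i: "i \<in> {1..m}" for i
    proof -
      have "card (set_power (G i) ((\<lambda>u. u i) ` U) n) \<le> card (set_power ?PG U n)"
        using proj_set_power[OF i, of G U n] card_image_le[OF fin] by metis
      then show ?thesis using assms(7)[OF n i] unfolding N_def c_def by linarith
    qed
    have N0: "N \<ge> 0" unfolding N_def by simp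
    have sub: "U \<subseteq> (\<Pi>\<^sub>E i\<in>{1..m}. (\<lambda>u. u i) ` U)"
      using assms(3) by (auto simp: PiE_iff)
    have "card U \<le> card (\<Pi>\<^sub>E i\<in>{1..m}. (\<lambda>u. u i) ` U)"
      by (rule card_mono[OF _ sub]) (simp add: finite_PiE assms(4))
    also have "\<dots> = (\<Prod>i\<in>{1..m}. card ((\<lambda>u. u i) ` U))" by (simp add: card_PiE)
    finally have cU: "real (card U) \<le> (\<Prod>i\<in>{1..m}. c i)" unfolding c_def
      by (metis of_nat_le_iff of_nat_prod)
    have "N ^ m = (\<Prod>i\<in>{1..m}. N)" by simp
    also have "\<dots> \<ge> (\<Prod>i\<in>{1..m}. (\<alpha> * c i) powr (\<beta> * real n))"
      by (rule prod_mono) (use Ni in auto)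
    finally have "N ^ m \<ge> (\<Prod>i\<in>{1..m}. \<alpha> * c i) powr (\<beta> * real n)"
      by (simp add: prod_powr_distrib)
    moreover have "(\<Prod>i\<in>{1..m}. \<alpha> * c i) = \<alpha> ^ m * (\<Prod>i\<in>{1..m}. c i)"
      by (simp add: prod.distrib)
    moreover have "\<alpha> ^ m * real (card U) \<le> \<alpha> ^ m * (\<Prod>i\<in>{1..m}. c i)"
      using cU assms(5) by simp
    moreover have "0 \<le> \<alpha> ^ m * real (card U)" using assms(5) by simp
    ultimately have key: "N ^ m \<ge> (\<alpha> ^ m * real (card U)) powr (\<beta> * real n)"
      by (smt (verit) assms(6) powr_mono2 mult_nonneg_nonneg of_nat_0_le_iff)
    have mpos: "real m > 0" using assms(1) by simp
    have "N = (N ^ m) powr (1 / real m)"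
    proof (cases "N = 0")
      case True then show ?thesis using assms(1) by simp
    next
      case False
      then have "N > 0" using N0 by simp
      then have "N ^ m = N powr real m" by (simp add: powr_realpow)
      then show ?thesis using mpos \<open>N > 0\<close> by (simp add: powr_powr)
    qed
    also have "\<dots> \<ge> ((\<alpha> ^ m * real (card U)) powr (\<beta> * real n)) powr (1 / real m)"
      by (rule powr_mono2) (use key mpos in auto)
    also have "((\<alpha> ^ m * real (card U)) powr (\<beta> * real n)) powr (1 / real m)
       = (\<alpha> ^ m * real (card U)) powr ((\<beta> / real m) * real n)"
      by (simp add: powr_powr)
    finally show ?thesis unfolding N_def .
  qed
qed

end
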